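(* Let $Q$ be a quantum circuit acting on $w$ qubits and $N$ a positive integer. Let $R^{(N)}$ be the circuit on $Nw+1$ qubits, consisting of a single-qubit register $\mathsf{O}$ (the first qubit) and, for each $j\in\{1,\dots,N\}$, a $(w-1)$-qubit register $\mathsf{R}_j$ and a single-qubit register $\mathsf{X}_j$, which for $j=1,\dots,N$ in turn applies $Q$ to $(\mathsf{O},\mathsf{R}_j)$ (with $\mathsf{O}$ as $Q$'s first qubit) and then the CNOT with control $\mathsf{O}$ and target $\mathsf{X}_j$; its output qubit is $\mathsf{O}$. Then \[p_{\mathrm{acc}}(R^{(N)},1)=\frac12+\frac12\bigl(2p_{\mathrm{acc}}(Q,1)-1\bigr)^N.\]
   Context: For a circuit $Q$ on $w$ qubits and $1\le k\le w$, $p_{\mathrm{acc}}(Q,k)=\mathrm{tr}\,\Pi_{\mathrm{acc}}Q\rho^{(w,k)}_{\mathrm{init}}Q^\dagger$, where $\rho^{(w,k)}_{\mathrm{init}}=(|0\rangle\langle0|)^{\otimes k}\otimes(I/2)^{\otimes(w-k)}$ and $\Pi_{\mathrm{acc}}=|0\rangle\langle0|\otimes I^{\otimes(w-1)}$; i.e., the first $k$ qubits start in $|0\rangle$, the remaining qubits are maximally mixed, and acceptance means the first qubit is measured as $0$ in the computational basis. For $R^{(N)}$ the first qubit is $\mathsf{O}$, so only $\mathsf{O}$ is clean. *)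

theory Defs
  imports Complex_Main "Jordan_Normal_Form.Matrix"
begin

definition adj :: "complex mat \<Rightarrow> complex mat" where
  "adj A = mat (dim_col A) (dim_row A) (\<lambda>(i,j). cnj (A $$ (j,i)))"

definition tr :: "complex mat \<Rightarrow> complex" where
  "tr A = (\<Sum>i<dim_row A. A $$ (i,i))"

definition unitary_mat :: "nat \<Rightarrow> complex mat \<Rightarrow> bool" where
  "unitary_mat d U \<longleftrightarrow> U \<in> carrier_mat d d \<and> U * adj U = 1\<^sub>m d \<and> adj U * U = 1\<^sub>m d"

text \<open>A basis state of an n-qubit system is an index i < 2^n; qubit q (q < n, qubit 0 is
  the first qubit, i.e. the leftmost tensor factor) is the bit of weight 2^(n-1-q).\<close>

definition qbit :: "nat \<Rightarrow> nat \<Rightarrow> nat \<Rightarrow> bool" where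
  "qbit n i q = odd (i div 2 ^ (n - 1 - q))"

definition subidx :: "nat \<Rightarrow> nat list \<Rightarrow> nat \<Rightarrow> nat" where
  "subidx n ps i = (\<Sum>t<length ps. if qbit n i (ps ! t) then 2 ^ (length ps - 1 - t) else 0)"

text \<open>The n-qubit operator applying the (length ps)-qubit gate U to the qubits ps
  (ps ! 0 is U's first qubit), acting as identity on all other qubits.\<close>
definition embed :: "nat \<Rightarrow> nat list \<Rightarrow> complex mat \<Rightarrow> complex mat" where
  "embed n ps U = mat (2 ^ n) (2 ^ n) (\<lambda>(i,j).
     if (\<forall>q<n. q \<notin> set ps \<longrightarrow> qbit n i q = qbit n j q)
     then U $$ (subidx n ps i, subidx n ps j) else 0)"

text \<open>CNOT on two qubits, first qubit control, second target.\<close>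
definition cnot :: "complex mat" where
  "cnot = mat 4 4 (\<lambda>(i,j). if i = (if j = 2 then 3 else if j = 3 then 2 else j) then 1 else 0)"

text \<open>rho_init^(w,k): first k qubits in |0>, remaining w-k maximally mixed.\<close>
definition rho_init :: "nat \<Rightarrow> nat \<Rightarrow> complex mat" where
  "rho_init w k = mat (2 ^ w) (2 ^ w) (\<lambda>(i,j).
     if i = j \<and> (\<forall>q<k. \<not> qbit w i q) then 1 / 2 ^ (w - k) else 0)"

definition Pi_acc :: "nat \<Rightarrow> complex mat" where
  "Pi_acc w = mat (2 ^ w) (2 ^ w) (\<lambda>(i,j). if i = j \<and> \<not> qbit w i 0 then 1 else 0)"

definition p_acc :: "complex mat \<Rightarrow> nat \<Rightarrow> nat \<Rightarrow> real" where
  "p_acc Q w k = Re (tr (Pi_acc w * Q * rho_init w k * adj Q))"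

text \<open>Layout on N*w+1 qubits: qubit 0 is O; for j = 1..N the register R_j is qubits
  (j-1)*w+1, ..., j*w-1 and X_j is qubit j*w.\<close>

definition R_reg :: "nat \<Rightarrow> nat \<Rightarrow> nat list" where
  "R_reg w j = [(j - 1) * w + 1 ..< j * w]"

definition X_reg :: "nat \<Rightarrow> nat \<Rightarrow> nat" where
  "X_reg w j = j * w"

fun Rsteps :: "complex mat \<Rightarrow> nat \<Rightarrow> nat \<Rightarrow> nat \<Rightarrow> complex mat" where
  "Rsteps Q w n 0 = 1\<^sub>m (2 ^ n)"
| "Rsteps Q w n (Suc j) =
     embed n [0, X_reg w (Suc j)] cnot * embed n (0 # R_reg w (Suc j)) Q * Rsteps Q w n j"

definition Rcirc :: "complex mat \<Rightarrow> nat \<Rightarrow> nat \<Rightarrow> complex mat" where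
  "Rcirc Q w N = Rsteps Q w (N * w + 1) N"

end

theory Submission
  imports Defs
begin



definition fromb :: "nat \<Rightarrow> (nat \<Rightarrow> bool) \<Rightarrow> nat" where
  "fromb m F = (\<Sum>t<m. if F t then 2 ^ (m - 1 - t) else 0)"

lemma fromb_0[simp]: "fromb 0 F = 0" by (simp add: fromb_def)

lemma fromb_Suc: "fromb (Suc m) F = (if F 0 then 2 ^ m else 0) + fromb m (\<lambda>t. F (Suc t))"
  unfolding fromb_def sum.lessThan_Suc_shift by (auto intro!: sum.cong)

lemma fromb_lt: "fromb m F < 2 ^ m"
proof (induction m arbitrary: F)
  case 0 then show ?case by simp
next
  case (Suc m)
  have "fromb m (\<lambda>t. F (Suc t)) < 2 ^ m" by (rule Suc.IH)
  then show ?case by (simp add: fromb_Suc)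
qed

lemma fromb_cong: "(\<And>t. t < m \<Longrightarrow> F t = G t) \<Longrightarrow> fromb m F = fromb m G"
  unfolding fromb_def by (rule sum.cong) auto

lemma qbit_bit: "qbit n i q = bit i (n - 1 - q)"
  by (simp add: qbit_def bit_iff_odd)

lemma bit_add_high:
  fixes y :: nat
  assumes "y < 2 ^ m" "e \<le> m"
  shows "bit (c * 2 ^ m + y) e = (if e = m then odd c else bit y e)"
proof -
  have eq: "c * 2 ^ m + y = y + 2 ^ m * c" by simp
  have fact: "bit (y + 2 ^ m * c) e = (if e = m then odd c else bit y e)"
  proof (cases "e = m")
    case True
    have "(y + 2 ^ m * c) div 2 ^ m = c" using assms by simp
    then show ?thesis using True by (simp add: bit_iff_odd)
  next
    case False
    then have em: "e < m" using assms by simp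
    have "bit (y + 2 ^ m * c) e = bit (take_bit m (y + 2 ^ m * c)) e"
      using em by (simp add: bit_take_bit_iff)
    also have "take_bit m (y + 2 ^ m * c) = y" using assms(1)
      by (simp add: take_bit_eq_mod)
    finally show ?thesis using False by simp
  qed
  show ?thesis unfolding eq by (rule fact)
qed

lemma qbit_fromb: "t < m \<Longrightarrow> qbit m (fromb m F) t = F t"
proof (induction m arbitrary: F t)
  case 0 then show ?case by simp
next
  case (Suc m)
  let ?c = "if F 0 then 1 else 0 :: nat"
  have eq: "fromb (Suc m) F = ?c * 2 ^ m + fromb m (\<lambda>t. F (Suc t))"
    by (simp add: fromb_Suc)
  have lt: "fromb m (\<lambda>t. F (Suc t)) < 2 ^ m" by (rule fromb_lt)
  show ?case
  proof (cases t)
    case 0 then show ?thesis unfolding qbit_bit eq using bit_add_high[OF lt, of m ?c] by simp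
  next
    case (Suc t')
    then have "t' < m" using Suc.prems by simp
    then have "qbit m (fromb m (\<lambda>t. F (Suc t))) t' = F (Suc t')" by (rule Suc.IH)
    moreover have "m - Suc t' \<noteq> m" using \<open>t' < m\<close> by simp
    ultimately show ?thesis unfolding qbit_bit eq using bit_add_high[OF lt, of "m - Suc t'" ?c] Suc
      by simp
  qed
qed

lemma fromb_qbit: "i < 2 ^ m \<Longrightarrow> fromb m (qbit m i) = i"
proof (induction m arbitrary: i)
  case 0 then show ?case by simp
next
  case (Suc m)
  define y where "y = i mod 2 ^ m"
  define c where "c = i div 2 ^ m"
  have y: "y < 2 ^ m" unfolding y_def by simp
  have c: "c < 2" using Suc.prems unfolding c_def by (simp add: less_mult_imp_div_less)
  have i: "i = c * 2 ^ m + y" unfolding c_def y_def by (metis div_mult_mod_eq)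
  have b0: "qbit (Suc m) i 0 = odd c" unfolding qbit_bit using bit_add_high[OF y, of m c] i by simp
  have bs: "qbit (Suc m) i (Suc t) = qbit m y t" if "t < m" for t
  proof -
    have "m - Suc t \<noteq> m" using that by simp
    then show ?thesis unfolding qbit_bit using bit_add_high[OF y, of "m - Suc t" c] i that by simp
  qed
  have "fromb m (\<lambda>t. qbit (Suc m) i (Suc t)) = fromb m (qbit m y)"
    by (rule fromb_cong) (simp add: bs)
  also have "\<dots> = y" using Suc.IH[OF y] .
  finally show ?case unfolding fromb_Suc b0 using c i by (cases "c = 0") auto
qed

lemma qbit_ext:
  assumes "i < 2 ^ m" "j < 2 ^ m" "\<And>t. t < m \<Longrightarrow> qbit m i t = qbit m j t"
  shows "i = j"
proof -
  have "fromb m (qbit m i) = fromb m (qbit m j)" by (rule fromb_cong) (use assms in auto)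
  then show ?thesis using fromb_qbit assms by simp
qed

lemma subidx_fromb: "subidx n ps i = fromb (length ps) (\<lambda>t. qbit n i (ps ! t))"
  unfolding subidx_def fromb_def ..


definition idx :: "nat list \<Rightarrow> nat \<Rightarrow> nat" where
  "idx ps q = (THE t. t < length ps \<and> ps ! t = q)"

lemma idx_nth: "distinct ps \<Longrightarrow> t < length ps \<Longrightarrow> idx ps (ps ! t) = t"
  unfolding idx_def by (rule the_equality) (auto simp: nth_eq_iff_index_eq)

lemma idx_mem: "distinct ps \<Longrightarrow> q \<in> set ps \<Longrightarrow> idx ps q < length ps \<and> ps ! idx ps q = q"
  by (metis idx_nth in_set_conv_nth)

definition clr :: "nat \<Rightarrow> nat list \<Rightarrow> nat \<Rightarrow> nat" where
  "clr n ps i = fromb n (\<lambda>q. q \<notin> set ps \<and> qbit n i q)"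

definition put :: "nat \<Rightarrow> nat list \<Rightarrow> nat \<Rightarrow> nat \<Rightarrow> nat" where
  "put n ps c s = fromb n (\<lambda>q. if q \<in> set ps then qbit (length ps) s (idx ps q) else qbit n c q)"

definition Cset :: "nat \<Rightarrow> nat list \<Rightarrow> nat set" where
  "Cset n ps = {c. c < 2 ^ n \<and> clr n ps c = c}"

lemma finite_Cset[simp]: "finite (Cset n ps)"
  unfolding Cset_def by simp

lemma qbit_put: "q < n \<Longrightarrow> qbit n (put n ps c s) q =
   (if q \<in> set ps then qbit (length ps) s (idx ps q) else qbit n c q)"
  unfolding put_def by (rule qbit_fromb)

lemma qbit_clr: "q < n \<Longrightarrow> qbit n (clr n ps i) q = (q \<notin> set ps \<and> qbit n i q)"
  unfolding clr_def by (rule qbit_fromb)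

lemma put_lt: "put n ps c s < 2 ^ n" unfolding put_def by (rule fromb_lt)
lemma clr_lt: "clr n ps c < 2 ^ n" unfolding clr_def by (rule fromb_lt)
lemma subidx_lt: "subidx n ps c < 2 ^ length ps" unfolding subidx_fromb by (rule fromb_lt)

lemma qbit_ext_n:
  assumes "i < 2 ^ n" "j < 2 ^ n" "\<And>q. q < n \<Longrightarrow> qbit n i q = qbit n j q"
  shows "i = j" using qbit_ext assms by blast

lemma qbit_Cset: "c \<in> Cset n ps \<Longrightarrow> q < n \<Longrightarrow> q \<in> set ps \<Longrightarrow> \<not> qbit n c q"
  unfolding Cset_def using qbit_clr by (metis (mono_tags, lifting) mem_Collect_eq)

locale blk =
  fixes n :: nat and ps :: "nat list"
  assumes dist: "distinct ps" and sub: "set ps \<subseteq> {..<n}"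
begin

lemma subidx_put: "s < 2 ^ length ps \<Longrightarrow> subidx n ps (put n ps c s) = s"
proof -
  assume s: "s < 2 ^ length ps"
  have "subidx n ps (put n ps c s) = fromb (length ps) (qbit (length ps) s)"
    unfolding subidx_fromb
  proof (rule fromb_cong)
    fix t assume t: "t < length ps"
    then have "ps ! t < n" "ps ! t \<in> set ps" using sub nth_mem by auto
    then show "qbit n (put n ps c s) (ps ! t) = qbit (length ps) s t"
      using qbit_put t dist by (simp add: idx_nth)
  qed
  then show ?thesis using fromb_qbit s by simp
qed

lemma put_clr_sub: "i < 2 ^ n \<Longrightarrow> put n ps (clr n ps i) (subidx n ps i) = i"
proof (rule qbit_ext_n[OF put_lt])
  fix q assume i: "i < 2 ^ n" and q: "q < n"
  show "qbit n (put n ps (clr n ps i) (subidx n ps i)) q = qbit n i q"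
  proof (cases "q \<in> set ps")
    case True
    then have "idx ps q < length ps" "ps ! idx ps q = q" using idx_mem dist by auto
    then show ?thesis using True q
      by (simp add: qbit_put subidx_fromb qbit_fromb)
  next
    case False then show ?thesis using q by (simp add: qbit_put qbit_clr)
  qed
qed

lemma clr_put: "c \<in> Cset n ps \<Longrightarrow> clr n ps (put n ps c s) = c"
proof -
  assume c: "c \<in> Cset n ps"
  then have cl: "c < 2 ^ n" "clr n ps c = c" unfolding Cset_def by auto
  show ?thesis
  proof (rule qbit_ext_n[OF clr_lt cl(1)])
    fix q assume q: "q < n"
    have "q \<in> set ps \<Longrightarrow> \<not> qbit n c q" using qbit_Cset[OF c q] by simp
    then show "qbit n (clr n ps (put n ps c s)) q = qbit n c q"
      using q by (simp add: qbit_clr qbit_put)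
  qed
qed

lemma clr_Cset: "clr n ps i \<in> Cset n ps"
proof -
  have "clr n ps (clr n ps i) = clr n ps i"
    by (rule qbit_ext_n[OF clr_lt clr_lt]) (simp add: qbit_clr)
  then show ?thesis unfolding Cset_def using clr_lt by simp
qed

lemma sum_block: "(\<Sum>i<2 ^ n. f i) = (\<Sum>c\<in>Cset n ps. \<Sum>s<2 ^ length ps. f (put n ps c s))"
proof -
  have "(\<Sum>c\<in>Cset n ps. \<Sum>s<2 ^ length ps. f (put n ps c s)) =
        (\<Sum>x\<in>Cset n ps \<times> {..<2 ^ length ps}. f (put n ps (fst x) (snd x)))"
    by (rule sum.cartesian_product[unfolded split_def])
  also have "\<dots> = (\<Sum>i<2 ^ n. f i)"
  proof (rule sum.reindex_bij_witness[where i = "\<lambda>k. (clr n ps k, subidx n ps k)"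
        and j = "\<lambda>x. put n ps (fst x) (snd x)"])
    fix a :: "nat \<times> nat" assume "a \<in> Cset n ps \<times> {..<2 ^ length ps}"
    then show "(clr n ps (put n ps (fst a) (snd a)), subidx n ps (put n ps (fst a) (snd a))) = a"
      using clr_put subidx_put by (cases a) auto
  next
    fix a :: "nat \<times> nat" show "put n ps (fst a) (snd a) \<in> {..<2 ^ n}" using put_lt by simp
  next
    fix b :: nat assume "b \<in> {..<2 ^ n}"
    then show "put n ps (fst (clr n ps b, subidx n ps b)) (snd (clr n ps b, subidx n ps b)) = b"
      using put_clr_sub by simp
  next
    fix b :: nat show "(clr n ps b, subidx n ps b) \<in> Cset n ps \<times> {..<2 ^ length ps}"
      using clr_Cset subidx_lt by simp
  qed simp
  finally show ?thesis by simp
qed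

lemma embed_agree_iff:
  assumes k: "k < 2 ^ n" and c: "c \<in> Cset n ps"
  shows "(\<forall>q<n. q \<notin> set ps \<longrightarrow> qbit n k q = qbit n (put n ps c s) q) \<longleftrightarrow> clr n ps k = c"
proof
  assume H: "\<forall>q<n. q \<notin> set ps \<longrightarrow> qbit n k q = qbit n (put n ps c s) q"
  show "clr n ps k = c"
  proof (rule qbit_ext_n[OF clr_lt])
    show "c < 2 ^ n" using c unfolding Cset_def by simp
    fix q assume q: "q < n"
    show "qbit n (clr n ps k) q = qbit n c q"
      using H q qbit_Cset[OF c q] by (auto simp: qbit_clr qbit_put)
  qed
next
  assume "clr n ps k = c"
  then show "\<forall>q<n. q \<notin> set ps \<longrightarrow> qbit n k q = qbit n (put n ps c s) q"
    by (auto simp: qbit_clr qbit_put)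
qed

lemma embed_apply:
  assumes k: "k < 2 ^ n"
  shows "(\<Sum>l<2 ^ n. embed n ps U $$ (k, l) * g l) =
         (\<Sum>s<2 ^ length ps. U $$ (subidx n ps k, s) * g (put n ps (clr n ps k) s))"
proof -
  have "(\<Sum>l<2 ^ n. embed n ps U $$ (k, l) * g l) =
     (\<Sum>c\<in>Cset n ps. \<Sum>s<2 ^ length ps. embed n ps U $$ (k, put n ps c s) * g (put n ps c s))"
    by (rule sum_block)
  also have "\<dots> = (\<Sum>c\<in>Cset n ps. if c = clr n ps k then
       (\<Sum>s<2 ^ length ps. U $$ (subidx n ps k, s) * g (put n ps c s)) else 0)"
  proof (rule sum.cong[OF refl])
    fix c assume c: "c \<in> Cset n ps"
    show "(\<Sum>s<2 ^ length ps. embed n ps U $$ (k, put n ps c s) * g (put n ps c s)) =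
      (if c = clr n ps k then (\<Sum>s<2 ^ length ps. U $$ (subidx n ps k, s) * g (put n ps c s)) else 0)"
      using embed_agree_iff[OF k c] k put_lt subidx_put
      by (auto simp: embed_def intro!: sum.cong)
  qed
  also have "\<dots> = (\<Sum>s<2 ^ length ps. U $$ (subidx n ps k, s) * g (put n ps (clr n ps k) s))"
    using clr_Cset by (simp add: sum.delta sum.delta')
  finally show ?thesis .
qed

end

lemma mult_entry:
  assumes "A \<in> carrier_mat d d'" "B \<in> carrier_mat d' d''" "k < d" "i < d''"
  shows "(A * B) $$ (k, i) = (\<Sum>l<d'. A $$ (k, l) * B $$ (l, i))"
  using assms by (simp add: index_mult_mat scalar_prod_def atLeast0LessThan)




lemma sum_single:
  assumes "finite A" "a \<in> A" "\<And>x. x \<in> A \<Longrightarrow> x \<noteq> a \<Longrightarrow> f x = 0"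
  shows "sum f A = f a"
proof -
  have "sum f A = f a + sum f (A - {a})" using assms by (simp add: sum.remove)
  also have "sum f (A - {a}) = 0" using assms by (intro sum.neutral) auto
  finally show ?thesis by simp
qed

definition sig :: "nat \<Rightarrow> nat" where
  "sig a = (if a = 2 then 3 else if a = 3 then 2 else a)"

lemma cnot_apply:
  assumes "a < 4"
  shows "(\<Sum>s<4. cnot $$ (a, s) * h s) = h (sig a)"
proof -
  have "(\<Sum>s<4. cnot $$ (a, s) * h s) = (\<Sum>s<4. (if s = sig a then 1 else 0) * h s)"
  proof (rule sum.cong[OF refl])
    fix s assume "s \<in> {..<4::nat}"
    then have "s < 4" by simp
    then show "cnot $$ (a, s) * h s = (if s = sig a then 1 else 0) * h s"
      using assms unfolding cnot_def sig_def by auto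
  qed
  also have "\<dots> = (\<Sum>s<4. if s = sig a then h s else 0)" by (rule sum.cong) auto
  also have "\<dots> = h (sig a)" using assms by (subst sum.delta) (auto simp: sig_def)
  finally show ?thesis .
qed

lemma sig_bits:
  "qbit 2 (sig (fromb 2 F)) 0 = F 0" "qbit 2 (sig (fromb 2 F)) 1 = (F 1 \<noteq> F 0)"
proof -
  have f: "fromb 2 F = (if F 0 then 2 else 0) + (if F 1 then 1 else 0)"
    unfolding fromb_def by (simp add: numeral_2_eq_2)
  show "qbit 2 (sig (fromb 2 F)) 0 = F 0" unfolding f
    by (cases "F 0"; cases "F 1") (simp_all add: sig_def qbit_def)
  show "qbit 2 (sig (fromb 2 F)) 1 = (F 1 \<noteq> F 0)" unfolding f
    by (cases "F 0"; cases "F 1") (simp_all add: sig_def qbit_def)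
qed

lemma sig_lt: "sig (fromb 2 F) < 4"
  using fromb_lt[of 2 F] by (auto simp: sig_def)


locale circ =
  fixes Q :: "complex mat" and w N :: nat
  assumes w1: "w \<ge> 1" and QC: "Q \<in> carrier_mat (2 ^ w) (2 ^ w)"
begin

abbreviation nn where "nn \<equiv> N * w + 1"
abbreviation S where "S j \<equiv> Rsteps Q w nn j"

definition psE :: "nat \<Rightarrow> nat list" where "psE j = 0 # R_reg w (Suc j)"
definition psC :: "nat \<Rightarrow> nat list" where "psC j = [0, X_reg w (Suc j)]"

definition bb :: "nat \<Rightarrow> nat \<Rightarrow> nat \<Rightarrow> bool" where
  "bb j k i = (if j = 0 then qbit nn i 0 else qbit nn k (j * w) \<noteq> qbit nn i (j * w))"

definition s0 :: "nat \<Rightarrow> nat \<Rightarrow> nat \<Rightarrow> nat" where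
  "s0 j k i = fromb w (\<lambda>t. if t = 0 then bb j k i else qbit nn i (j * w + t))"

definition l0 :: "nat \<Rightarrow> nat \<Rightarrow> nat \<Rightarrow> nat" where
  "l0 j k i = fromb nn (\<lambda>q. if q = 0 then bb j k i
      else if j * w < q \<and> q < Suc j * w then qbit nn i q
      else if q = Suc j * w then (qbit nn k q \<noteq> qbit nn k 0) else qbit nn k q)"

definition Supp :: "nat \<Rightarrow> bool" where
  "Supp j = (\<forall>k<2 ^ nn. \<forall>i<2 ^ nn. S j $$ (k, i) \<noteq> 0 \<longrightarrow>
     (\<forall>q. j * w < q \<and> q < nn \<longrightarrow> qbit nn k q = qbit nn i q) \<and> qbit nn k 0 = bb j k i)"

lemma embed_carrier: "embed n ps U \<in> carrier_mat (2 ^ n) (2 ^ n)"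
  unfolding embed_def by simp

lemma Rsteps_carrier: "Rsteps Q w n j \<in> carrier_mat (2 ^ n) (2 ^ n)"
proof (induction j)
  case 0 then show ?case by simp
next
  case (Suc j)
  show ?case unfolding Rsteps.simps
    by (rule mult_carrier_mat[OF mult_carrier_mat[OF embed_carrier embed_carrier] Suc.IH])
qed

lemma S_carrier: "S j \<in> carrier_mat (2 ^ nn) (2 ^ nn)" by (rule Rsteps_carrier)

lemma psE_len: "length (psE j) = w"
  using w1 unfolding psE_def R_reg_def by simp

lemma psE_nth: "t < w \<Longrightarrow> psE j ! t = (if t = 0 then 0 else j * w + t)"
  unfolding psE_def R_reg_def by (cases t) (auto simp: nth_upt)

lemma psE_set: "q \<in> set (psE j) \<longleftrightarrow> q = 0 \<or> (j * w < q \<and> q < Suc j * w)"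
  unfolding psE_def R_reg_def by auto

lemma blkE: "j < N \<Longrightarrow> blk nn (psE j)"
proof
  assume j: "j < N"
  show "distinct (psE j)" unfolding psE_def R_reg_def by simp
  have "Suc j * w \<le> N * w" using j by (intro mult_le_mono1) simp
  then show "set (psE j) \<subseteq> {..<nn}" unfolding psE_def R_reg_def by auto
qed

lemma blkC: "j < N \<Longrightarrow> blk nn (psC j)"
proof
  assume j: "j < N"
  show "distinct (psC j)" unfolding psC_def X_reg_def using w1 by simp
  have "Suc j * w \<le> N * w" using j by (intro mult_le_mono1) simp
  then show "set (psC j) \<subseteq> {..<nn}" unfolding psC_def X_reg_def by auto
qed

lemma psC_idx: "idx (psC j) 0 = 0" "idx (psC j) (Suc j * w) = 1"
proof -
  have d: "distinct (psC j)" unfolding psC_def X_reg_def using w1 by simp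
  show "idx (psC j) 0 = 0" using idx_nth[OF d, of 0] unfolding psC_def by simp
  show "idx (psC j) (Suc j * w) = 1" using idx_nth[OF d, of 1] unfolding psC_def X_reg_def by simp
qed

definition t0 :: "nat \<Rightarrow> nat \<Rightarrow> nat" where
  "t0 j k = put nn (psC j) (clr nn (psC j) k) (sig (subidx nn (psC j) k))"

lemma qbit_t0: "q < nn \<Longrightarrow> qbit nn (t0 j k) q = (if q = 0 then qbit nn k 0
   else if q = Suc j * w then (qbit nn k (Suc j * w) \<noteq> qbit nn k 0) else qbit nn k q)"
proof -
  assume q: "q < nn"
  have len: "length (psC j) = 2" unfolding psC_def by simp
  have sub: "subidx nn (psC j) k = fromb 2 (\<lambda>t. qbit nn k (psC j ! t))"
    unfolding subidx_fromb len ..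
  have w0: "Suc j * w \<noteq> 0" using w1 by simp
  show ?thesis unfolding t0_def qbit_put[OF q] len sub
    using sig_bits[of "\<lambda>t. qbit nn k (psC j ! t)"] psC_idx w0 q
    by (auto simp: psC_def X_reg_def qbit_clr)
qed

end




context circ begin

lemma nn_bound: "j < N \<Longrightarrow> Suc j * w < nn"
proof -
  assume "j < N"
  then have "Suc j * w \<le> N * w" by (intro mult_le_mono1) simp
  then show ?thesis by simp
qed

lemma qbit_ls:
  assumes j: "j < N" and q: "q < nn"
  shows "qbit nn (put nn (psE j) (clr nn (psE j) x) s) q =
    (if q \<in> set (psE j) then qbit w s (idx (psE j) q) else qbit nn x q)"
  using q by (simp add: qbit_put qbit_clr psE_len)

lemma step:
  assumes j: "j < N" and supp: "Supp j" and k: "k < 2 ^ nn" and i: "i < 2 ^ nn"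
  shows "S (Suc j) $$ (k, i) = Q $$ (subidx nn (psE j) k, s0 j k i) * S j $$ (l0 j k i, i)"
proof -
  interpret E: blk nn "psE j" by (rule blkE[OF j])
  interpret C: blk nn "psC j" by (rule blkC[OF j])
  have t0lt: "t0 j k < 2 ^ nn" unfolding t0_def by (rule put_lt)
  let ?C = "embed nn (psC j) cnot" and ?E = "embed nn (psE j) Q"
  have SS: "S (Suc j) = ?C * ?E * S j" by (simp add: psC_def psE_def)
  have "S (Suc j) = ?C * (?E * S j)" unfolding SS
    by (rule assoc_mult_mat[OF embed_carrier embed_carrier S_carrier])
  then have "S (Suc j) $$ (k, i) = (\<Sum>l<2 ^ nn. ?C $$ (k, l) * (?E * S j) $$ (l, i))"
    using mult_entry[OF embed_carrier mult_carrier_mat[OF embed_carrier S_carrier] k i] by simp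
  also have "\<dots> = (\<Sum>s<4. cnot $$ (subidx nn (psC j) k, s) * (?E * S j) $$ (put nn (psC j) (clr nn (psC j) k) s, i))"
    using C.embed_apply[OF k] by (simp add: psC_def)
  also have "\<dots> = (?E * S j) $$ (t0 j k, i)"
  proof -
    have "subidx nn (psC j) k < 4" using subidx_lt[of nn "psC j" k] by (simp add: psC_def)
    then show ?thesis unfolding t0_def by (rule cnot_apply)
  qed
  also have "\<dots> = (\<Sum>l<2 ^ nn. ?E $$ (t0 j k, l) * S j $$ (l, i))"
    by (rule mult_entry[OF embed_carrier S_carrier t0lt i])
  also have "\<dots> = (\<Sum>s<2 ^ w. Q $$ (subidx nn (psE j) (t0 j k), s) * S j $$ (put nn (psE j) (clr nn (psE j) (t0 j k)) s, i))"
    using E.embed_apply[OF t0lt, of Q "\<lambda>l. S j $$ (l, i)"] psE_len by simp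
  also have "\<dots> = Q $$ (subidx nn (psE j) (t0 j k), s0 j k i) * S j $$ (put nn (psE j) (clr nn (psE j) (t0 j k)) (s0 j k i), i)"
  proof (rule sum_single)
    show "s0 j k i \<in> {..<2 ^ w}" unfolding s0_def using fromb_lt by simp
    fix s assume s: "s \<in> {..<2 ^ w}" and ne: "s \<noteq> s0 j k i"
    let ?l = "put nn (psE j) (clr nn (psE j) (t0 j k)) s"
    have "S j $$ (?l, i) = 0"
    proof (rule ccontr)
      assume nz: "S j $$ (?l, i) \<noteq> 0"
      have lt: "?l < 2 ^ nn" by (rule put_lt)
      from supp nz lt i have above: "\<And>q. j * w < q \<Longrightarrow> q < nn \<Longrightarrow> qbit nn ?l q = qbit nn i q"
        and zero: "qbit nn ?l 0 = bb j ?l i" unfolding Supp_def by blast+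
      have "s = s0 j k i"
      proof (rule qbit_ext)
        show "s < 2 ^ w" using s by simp
        show "s0 j k i < 2 ^ w" unfolding s0_def by (rule fromb_lt)
        fix t assume t: "t < w"
        have pt: "psE j ! t \<in> set (psE j)" using t psE_len nth_mem by metis
        have ptn: "psE j ! t < nn" using pt E.sub by auto
        have dist: "distinct (psE j)" by (rule E.dist)
        have "qbit nn ?l (psE j ! t) = qbit w s t"
          using qbit_ls[OF j ptn] pt idx_nth[OF dist] t psE_len by simp
        moreover have "qbit nn ?l (psE j ! t) = qbit w (s0 j k i) t"
        proof (cases "t = 0")
          case True
          have "bb j ?l i = bb j k i"
          proof (cases "j = 0")
            case False
            have jw: "j * w < nn" "j * w \<noteq> 0" "j * w \<notin> set (psE j)" "j * w \<noteq> Suc j * w"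
              using nn_bound[OF j] False w1 by (auto simp: psE_set)
            then have "qbit nn ?l (j * w) = qbit nn k (j * w)"
              using qbit_ls[OF j jw(1)] qbit_t0[OF jw(1)] by simp
            then show ?thesis unfolding bb_def by simp
          qed (simp add: bb_def)
          then show ?thesis using True zero psE_nth[OF t] unfolding s0_def
            using qbit_fromb[OF t] by simp
        next
          case False
          have "j * w < j * w + t" "j * w + t < nn" using False t nn_bound[OF j] by auto
          then show ?thesis using above psE_nth[OF t] False unfolding s0_def
            using qbit_fromb[OF t] by simp
        qed
        ultimately show "qbit w s t = qbit w (s0 j k i) t" by simp
      qed
      then show False using ne by simp
    qed
    then show "Q $$ (subidx nn (psE j) (t0 j k), s) * S j $$ (?l, i) = 0" by simp
  qed simp
  also have "subidx nn (psE j) (t0 j k) = subidx nn (psE j) k"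
    unfolding subidx_fromb
  proof (rule fromb_cong)
    fix t assume t: "t < length (psE j)"
    then have "psE j ! t \<in> set (psE j)" by simp
    then have "psE j ! t < nn" using E.sub by auto
    moreover have "psE j ! t \<noteq> Suc j * w" using psE_nth[of t j] t psE_len by auto
    ultimately show "qbit nn (t0 j k) (psE j ! t) = qbit nn k (psE j ! t)"
      using qbit_t0 by auto
  qed
  also have "put nn (psE j) (clr nn (psE j) (t0 j k)) (s0 j k i) = l0 j k i"
  proof (rule qbit_ext_n[OF put_lt])
    show "l0 j k i < 2 ^ nn" unfolding l0_def by (rule fromb_lt)
    fix q assume q: "q < nn"
    show "qbit nn (put nn (psE j) (clr nn (psE j) (t0 j k)) (s0 j k i)) q = qbit nn (l0 j k i) q"
    proof (cases "q \<in> set (psE j)")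
      case qin: True
      define t where "t = idx (psE j) q"
      have t: "t < w" "psE j ! t = q" using idx_mem[OF E.dist qin] psE_len unfolding t_def by auto
      have lhs: "qbit nn (put nn (psE j) (clr nn (psE j) (t0 j k)) (s0 j k i)) q = qbit w (s0 j k i) t"
        using qbit_ls[OF j q] qin unfolding t_def by simp
      have s0t: "qbit w (s0 j k i) t = (if t = 0 then bb j k i else qbit nn i (j * w + t))"
        unfolding s0_def by (rule qbit_fromb[OF t(1)])
      have l0q: "qbit nn (l0 j k i) q = (if q = 0 then bb j k i
          else if j * w < q \<and> q < Suc j * w then qbit nn i q
          else if q = Suc j * w then (qbit nn k q \<noteq> qbit nn k 0) else qbit nn k q)"
        unfolding l0_def by (rule qbit_fromb[OF q])
      show ?thesis
      proof (cases "t = 0")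
        case t0: True
        then have "q = 0" using t psE_nth by metis
        then show ?thesis using lhs s0t l0q t0 by simp
      next
        case tn: False
        then have qq: "q = j * w + t" using t psE_nth by metis
        then have "j * w < q \<and> q < Suc j * w" "q \<noteq> 0" using tn t by auto
        then show ?thesis using lhs s0t l0q tn qq by simp
      qed
    next
      case False
      then have "q \<noteq> 0" "\<not> (j * w < q \<and> q < Suc j * w)" using psE_set by auto
      then show ?thesis using qbit_ls[OF j q] False qbit_t0[OF q] unfolding l0_def
        using qbit_fromb[OF q] by auto
    qed
  qed
  finally show ?thesis .
qed

end




context circ begin

lemma Supp_0: "Supp 0"
  unfolding Supp_def bb_def by auto

lemma Supp_Suc: assumes j: "j < N" and supp: "Supp j" shows "Supp (Suc j)"
  unfolding Supp_def
proof (intro allI impI)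
  fix k i assume k: "k < 2 ^ nn" and i: "i < 2 ^ nn" and nz: "S (Suc j) $$ (k, i) \<noteq> 0"
  then have nz2: "S j $$ (l0 j k i, i) \<noteq> 0" using step[OF j supp k i] by auto
  have llt: "l0 j k i < 2 ^ nn" unfolding l0_def by (rule fromb_lt)
  from supp nz2 llt i have above: "\<And>q. j * w < q \<Longrightarrow> q < nn \<Longrightarrow> qbit nn (l0 j k i) q = qbit nn i q"
    unfolding Supp_def by blast
  have l0q: "\<And>q. q < nn \<Longrightarrow> qbit nn (l0 j k i) q = (if q = 0 then bb j k i
          else if j * w < q \<and> q < Suc j * w then qbit nn i q
          else if q = Suc j * w then (qbit nn k q \<noteq> qbit nn k 0) else qbit nn k q)"
    unfolding l0_def by (rule qbit_fromb)
  show "(\<forall>q. Suc j * w < q \<and> q < nn \<longrightarrow> qbit nn k q = qbit nn i q) \<and> qbit nn k 0 = bb (Suc j) k i"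
  proof
    show "\<forall>q. Suc j * w < q \<and> q < nn \<longrightarrow> qbit nn k q = qbit nn i q"
    proof (intro allI impI)
      fix q assume q: "Suc j * w < q \<and> q < nn"
      then have "j * w < q" "q \<noteq> 0" by auto
      then show "qbit nn k q = qbit nn i q" using above[of q] l0q[of q] q by auto
    qed
    have X: "Suc j * w < nn" "j * w < Suc j * w" "Suc j * w \<noteq> 0" using nn_bound[OF j] w1 by auto
    have "(qbit nn k (Suc j * w) \<noteq> qbit nn k 0) = qbit nn i (Suc j * w)"
      using above[OF X(2) X(1)] l0q[OF X(1)] X by simp
    then show "qbit nn k 0 = bb (Suc j) k i" unfolding bb_def by auto
  qed
qed

lemma Supp_all: "j \<le> N \<Longrightarrow> Supp j"
proof (induction j)
  case 0 show ?case by (rule Supp_0)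
next
  case (Suc j) then show ?case using Supp_Suc by simp
qed

end




context circ begin

definition G :: "nat \<Rightarrow> nat \<Rightarrow> bool \<Rightarrow> real" where
  "G j i b = (\<Sum>k<2 ^ nn. if qbit nn k 0 = b then (cmod (S j $$ (k, i)))\<^sup>2 else 0)"

definition T :: "bool \<Rightarrow> nat \<Rightarrow> real" where
  "T b s' = (\<Sum>s<2 ^ w. if qbit w s 0 = b then (cmod (Q $$ (s, s')))\<^sup>2 else 0)"

definition s0' :: "nat \<Rightarrow> bool \<Rightarrow> nat \<Rightarrow> nat" where
  "s0' j b i = fromb w (\<lambda>t. if t = 0 then b else qbit nn i (j * w + t))"

definition lf :: "nat \<Rightarrow> nat \<Rightarrow> nat \<Rightarrow> bool \<Rightarrow> nat" where
  "lf j i c b = fromb nn (\<lambda>q. if q = 0 then bb j c i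
      else if j * w < q \<and> q < Suc j * w then qbit nn i q
      else if q = Suc j * w then (qbit nn c q \<noteq> b) else qbit nn c q)"

definition flip :: "nat \<Rightarrow> nat \<Rightarrow> nat" where
  "flip j c = fromb nn (\<lambda>q. if q = Suc j * w then \<not> qbit nn c q else qbit nn c q)"

lemma s0_s0': "s0 j k i = s0' j (bb j k i) i"
  unfolding s0_def s0'_def ..

lemma qbit_putE: "q < nn \<Longrightarrow> c \<in> Cset nn (psE j) \<Longrightarrow>
   qbit nn (put nn (psE j) c s) q = (if q \<in> set (psE j) then qbit w s (idx (psE j) q) else qbit nn c q)"
  by (simp add: qbit_put psE_len)

lemma idx_psE0: "j < N \<Longrightarrow> idx (psE j) 0 = 0"
proof -
  assume j: "j < N"
  interpret E: blk nn "psE j" by (rule blkE[OF j])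
  show ?thesis using idx_nth[OF E.dist, of 0] psE_nth[of 0 j] psE_len w1 by simp
qed

lemma bb_put: "j < N \<Longrightarrow> bb j (put nn (psE j) c s) i = bb j c i"
proof (cases "j = 0")
  case False
  assume j: "j < N"
  have jw: "j * w < nn" "j * w \<notin> set (psE j)" using nn_bound[OF j] False w1 by (auto simp: psE_set)
  then show ?thesis unfolding bb_def using qbit_put[OF jw(1)] by simp
qed (simp add: bb_def)

lemma qbit_put0: "j < N \<Longrightarrow> qbit nn (put nn (psE j) c s) 0 = qbit w s 0"
  using qbit_put[of 0 nn "psE j" c s] idx_psE0 psE_set psE_len by simp

lemma l0_put: assumes j: "j < N"
  shows "l0 j (put nn (psE j) c s) i = lf j i c (qbit w s 0)"
proof (rule qbit_ext_n)
  show "l0 j (put nn (psE j) c s) i < 2 ^ nn" unfolding l0_def by (rule fromb_lt)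
  show "lf j i c (qbit w s 0) < 2 ^ nn" unfolding lf_def by (rule fromb_lt)
  fix q assume q: "q < nn"
  have X: "Suc j * w \<notin> set (psE j)" "Suc j * w < nn" using psE_set nn_bound[OF j] w1 by auto
  show "qbit nn (l0 j (put nn (psE j) c s) i) q = qbit nn (lf j i c (qbit w s 0)) q"
    unfolding l0_def lf_def qbit_fromb[OF q]
    using bb_put[OF j] qbit_put0[OF j] qbit_put[OF q, of "psE j" c s] qbit_put[OF X(2), of "psE j" c s] X(1)
      psE_set[of q j]
    by auto
qed

lemma flip_Cset: assumes j: "j < N" and c: "c \<in> Cset nn (psE j)" shows "flip j c \<in> Cset nn (psE j)"
proof -
  have "clr nn (psE j) (flip j c) = flip j c"
  proof (rule qbit_ext_n[OF clr_lt])
    show "flip j c < 2 ^ nn" unfolding flip_def by (rule fromb_lt)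
    fix q assume q: "q < nn"
    show "qbit nn (clr nn (psE j) (flip j c)) q = qbit nn (flip j c) q"
      unfolding qbit_clr[OF q] flip_def qbit_fromb[OF q]
      using qbit_Cset[OF c q] psE_set[of "Suc j * w" j] w1 by auto
  qed
  moreover have "flip j c < 2 ^ nn" unfolding flip_def by (rule fromb_lt)
  ultimately show ?thesis unfolding Cset_def by simp
qed

lemma flip_flip: assumes c: "c < 2 ^ nn" shows "flip j (flip j c) = c"
proof (rule qbit_ext_n[OF _ c])
  show "flip j (flip j c) < 2 ^ nn" unfolding flip_def by (rule fromb_lt)
  fix q assume q: "q < nn"
  show "qbit nn (flip j (flip j c)) q = qbit nn c q"
    unfolding flip_def qbit_fromb[OF q] by simp
qed

lemma bb_flip: "j < N \<Longrightarrow> bb j (flip j c) i = bb j c i"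
proof (cases "j = 0")
  case False
  assume j: "j < N"
  have jw: "j * w < nn" "j * w \<noteq> Suc j * w" using nn_bound[OF j] False w1 by auto
  then show ?thesis unfolding bb_def flip_def qbit_fromb[OF jw(1)] by simp
qed (simp add: bb_def)

lemma lf_flip: assumes j: "j < N" shows "lf j i (flip j c) False = lf j i c True"
  unfolding lf_def
proof (rule fromb_cong)
  fix q assume q: "q < nn"
  show "(if q = 0 then bb j (flip j c) i
          else if j * w < q \<and> q < Suc j * w then qbit nn i q
          else if q = Suc j * w then qbit nn (flip j c) q \<noteq> False else qbit nn (flip j c) q) =
        (if q = 0 then bb j c i else if j * w < q \<and> q < Suc j * w then qbit nn i q
          else if q = Suc j * w then qbit nn c q \<noteq> True else qbit nn c q)"
    using bb_flip[OF j] unfolding flip_def qbit_fromb[OF q] by simp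
qed

lemma collapse:
  assumes j: "j < N" and supp: "Supp j" and i: "i < 2 ^ nn" and c: "c \<in> Cset nn (psE j)"
    and s: "s < 2 ^ w" and nz: "S j $$ (put nn (psE j) c s, i) \<noteq> 0"
  shows "s = s0 j c i"
proof -
  interpret E: blk nn "psE j" by (rule blkE[OF j])
  let ?l = "put nn (psE j) c s"
  have lt: "?l < 2 ^ nn" by (rule put_lt)
  from supp nz lt i have above: "\<And>q. j * w < q \<Longrightarrow> q < nn \<Longrightarrow> qbit nn ?l q = qbit nn i q"
    and zero: "qbit nn ?l 0 = bb j ?l i" unfolding Supp_def by blast+
  show "s = s0 j c i"
  proof (rule qbit_ext[OF s])
    show "s0 j c i < 2 ^ w" unfolding s0_def by (rule fromb_lt)
    fix t assume t: "t < w"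
    have pt: "psE j ! t \<in> set (psE j)" using t psE_len nth_mem by metis
    have ptn: "psE j ! t < nn" using pt E.sub by auto
    have "qbit nn ?l (psE j ! t) = qbit w s t"
      using qbit_put[OF ptn] pt idx_nth[OF E.dist] t psE_len by simp
    moreover have "qbit nn ?l (psE j ! t) = qbit w (s0 j c i) t"
    proof (cases "t = 0")
      case True
      then show ?thesis using zero bb_put[OF j] psE_nth[OF t] unfolding s0_def
        using qbit_fromb[OF t] by simp
    next
      case False
      have "j * w < j * w + t" "j * w + t < nn" using False t nn_bound[OF j] by auto
      then show ?thesis using above psE_nth[OF t] False unfolding s0_def
        using qbit_fromb[OF t] by simp
    qed
    ultimately show "qbit w s t = qbit w (s0 j c i) t" by simp
  qed
qed

lemma put_s0: assumes j: "j < N" and c: "c \<in> Cset nn (psE j)"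
  shows "put nn (psE j) c (s0 j c i) = lf j i c False"
proof (rule qbit_ext_n[OF put_lt])
  interpret E: blk nn "psE j" by (rule blkE[OF j])
  show "lf j i c False < 2 ^ nn" unfolding lf_def by (rule fromb_lt)
  fix q assume q: "q < nn"
  have lfq: "qbit nn (lf j i c False) q = (if q = 0 then bb j c i
      else if j * w < q \<and> q < Suc j * w then qbit nn i q
      else if q = Suc j * w then (qbit nn c q \<noteq> False) else qbit nn c q)"
    unfolding lf_def by (rule qbit_fromb[OF q])
  show "qbit nn (put nn (psE j) c (s0 j c i)) q = qbit nn (lf j i c False) q"
  proof (cases "q \<in> set (psE j)")
    case qin: True
    define t where "t = idx (psE j) q"
    have t: "t < w" "psE j ! t = q" using idx_mem[OF E.dist qin] psE_len unfolding t_def by auto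
    have lhs: "qbit nn (put nn (psE j) c (s0 j c i)) q = qbit w (s0 j c i) t"
      using qbit_put[OF q] qin psE_len unfolding t_def by simp
    have s0t: "qbit w (s0 j c i) t = (if t = 0 then bb j c i else qbit nn i (j * w + t))"
      unfolding s0_def by (rule qbit_fromb[OF t(1)])
    show ?thesis
    proof (cases "t = 0")
      case t0: True
      then have "q = 0" using t psE_nth by metis
      then show ?thesis using lhs s0t lfq t0 by simp
    next
      case tn: False
      then have qq: "q = j * w + t" using t psE_nth by metis
      then have "j * w < q \<and> q < Suc j * w" "q \<noteq> 0" using tn t by auto
      then show ?thesis using lhs s0t lfq tn qq by simp
    qed
  next
    case False
    then have "q \<noteq> 0" "\<not> (j * w < q \<and> q < Suc j * w)" using psE_set by auto
    then show ?thesis using qbit_put[OF q] False lfq by auto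
  qed
qed

lemma s0_flip: "j < N \<Longrightarrow> s0 j (flip j c) i = s0 j c i"
  unfolding s0_s0' using bb_flip by simp

lemma sum_flip:
  assumes j: "j < N"
  shows "(\<Sum>c\<in>Cset nn (psE j). f (flip j c)) = (\<Sum>c\<in>Cset nn (psE j). f c)"
proof -
  have fl: "\<And>a. a \<in> Cset nn (psE j) \<Longrightarrow> flip j (flip j a) = a"
    using flip_flip unfolding Cset_def by simp
  have fc: "\<And>a. a \<in> Cset nn (psE j) \<Longrightarrow> flip j a \<in> Cset nn (psE j)"
    using flip_Cset[OF j] by simp
  show ?thesis
    by (rule sum.reindex_bij_witness[where i = "flip j" and j = "flip j"]) (use fl fc in auto)
qed

lemma G_rec:
  assumes j: "j < N" and i: "i < 2 ^ nn"
  shows "G (Suc j) i b = (\<Sum>b'\<in>UNIV. T b (s0' j b' i) * G j i b')"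
proof -
  interpret E: blk nn "psE j" by (rule blkE[OF j])
  have supp: "Supp j" using Supp_all j by simp
  define X where "X c = (cmod (S j $$ (lf j i c False, i)))\<^sup>2" for c
  have "G (Suc j) i b = (\<Sum>k<2 ^ nn. if qbit nn k 0 = b then
      (cmod (Q $$ (subidx nn (psE j) k, s0 j k i) * S j $$ (l0 j k i, i)))\<^sup>2 else 0)"
    unfolding G_def using step[OF j supp _ i] by (intro sum.cong) auto
  also have "\<dots> = (\<Sum>c\<in>Cset nn (psE j). \<Sum>s<2 ^ w. if qbit w s 0 = b then
      (cmod (Q $$ (s, s0 j c i)))\<^sup>2 * (cmod (S j $$ (lf j i c b, i)))\<^sup>2 else 0)"
    unfolding E.sum_block psE_len
  proof (intro sum.cong refl)
    fix c s :: nat assume c: "c \<in> Cset nn (psE j)" and s: "s \<in> {..<2 ^ w}"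
    show "(if qbit nn (put nn (psE j) c s) 0 = b
       then (cmod (Q $$ (subidx nn (psE j) (put nn (psE j) c s), s0 j (put nn (psE j) c s) i) *
                   S j $$ (l0 j (put nn (psE j) c s) i, i)))\<^sup>2 else 0) =
      (if qbit w s 0 = b then (cmod (Q $$ (s, s0 j c i)))\<^sup>2 * (cmod (S j $$ (lf j i c b, i)))\<^sup>2 else 0)"
      using qbit_put0[OF j] E.subidx_put[of s] s psE_len l0_put[OF j] bb_put[OF j]
      by (auto simp: s0_s0' norm_mult power_mult_distrib)
  qed
  also have "\<dots> = (\<Sum>c\<in>Cset nn (psE j). T b (s0 j c i) * (cmod (S j $$ (lf j i c b, i)))\<^sup>2)"
    unfolding T_def sum_distrib_right by (intro sum.cong refl) auto
  also have "\<dots> = (\<Sum>c\<in>Cset nn (psE j). T b (s0 j c i) * X c)"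
  proof (cases b)
    case True
    have "(\<Sum>c\<in>Cset nn (psE j). T b (s0 j c i) * (cmod (S j $$ (lf j i c b, i)))\<^sup>2) =
      (\<Sum>c\<in>Cset nn (psE j). T b (s0 j (flip j c) i) * X (flip j c))"
      unfolding X_def using True lf_flip[OF j] s0_flip[OF j] by simp
    also have "\<dots> = (\<Sum>c\<in>Cset nn (psE j). T b (s0 j c i) * X c)"
      by (rule sum_flip[OF j, where f = "\<lambda>c. T b (s0 j c i) * X c"])
    finally show ?thesis .
  qed (simp add: X_def)
  also have "\<dots> = (\<Sum>b'\<in>UNIV. T b (s0' j b' i) * G j i b')"
  proof -
    have Gj: "G j i b' = (\<Sum>c\<in>Cset nn (psE j). if bb j c i = b' then X c else 0)" for b'
    proof -
      have "G j i b' = (\<Sum>c\<in>Cset nn (psE j). \<Sum>s<2 ^ w.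
           if qbit w s 0 = b' then (cmod (S j $$ (put nn (psE j) c s, i)))\<^sup>2 else 0)"
        unfolding G_def E.sum_block psE_len using qbit_put0[OF j] by simp
      also have "\<dots> = (\<Sum>c\<in>Cset nn (psE j). if bb j c i = b' then X c else 0)"
      proof (rule sum.cong[OF refl])
        fix c assume c: "c \<in> Cset nn (psE j)"
        have s0lt: "s0 j c i < 2 ^ w" unfolding s0_def by (rule fromb_lt)
        have hb: "qbit w (s0 j c i) 0 = bb j c i" unfolding s0_def using qbit_fromb[of 0 w] w1 by simp
        have "(\<Sum>s<2 ^ w. if qbit w s 0 = b' then (cmod (S j $$ (put nn (psE j) c s, i)))\<^sup>2 else 0)
          = (if qbit w (s0 j c i) 0 = b' then (cmod (S j $$ (put nn (psE j) c (s0 j c i), i)))\<^sup>2 else 0)"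
        proof (rule sum_single)
          show "s0 j c i \<in> {..<2 ^ w}" using s0lt by simp
          fix s :: nat assume "s \<in> {..<2 ^ w}" "s \<noteq> s0 j c i"
          then have "S j $$ (put nn (psE j) c s, i) = 0" using collapse[OF j supp i c] by auto
          then show "(if qbit w s 0 = b' then (cmod (S j $$ (put nn (psE j) c s, i)))\<^sup>2 else 0) = 0" by simp
        qed simp
        also have "\<dots> = (if bb j c i = b' then X c else 0)"
          unfolding hb X_def put_s0[OF j c] ..
        finally show "(\<Sum>s<2 ^ w. if qbit w s 0 = b' then (cmod (S j $$ (put nn (psE j) c s, i)))\<^sup>2 else 0)
           = (if bb j c i = b' then X c else 0)" .
      qed
      finally show ?thesis .
    qed
    have "(\<Sum>b'\<in>UNIV. T b (s0' j b' i) * G j i b') =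
       (\<Sum>b'\<in>UNIV. \<Sum>c\<in>Cset nn (psE j). if bb j c i = b' then T b (s0' j b' i) * X c else 0)"
      unfolding Gj sum_distrib_left by (intro sum.cong refl) auto
    also have "\<dots> = (\<Sum>c\<in>Cset nn (psE j). \<Sum>b'\<in>UNIV. if bb j c i = b' then T b (s0' j b' i) * X c else 0)"
      by (rule sum.swap)
    also have "\<dots> = (\<Sum>c\<in>Cset nn (psE j). T b (s0 j c i) * X c)"
      unfolding s0_s0' by (simp add: sum.delta)
    finally show ?thesis by simp
  qed
  finally show ?thesis .
qed

end




context circ begin

lemma G0: "i < 2 ^ nn \<Longrightarrow> G 0 i b = (if qbit nn i 0 = b then 1 else 0)"
proof -
  assume i: "i < 2 ^ nn"
  have "G 0 i b = (\<Sum>k<2 ^ nn. if k = i then (if qbit nn k 0 = b then 1 else 0) else 0)"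
    unfolding G_def using i by (intro sum.cong refl) auto
  also have "\<dots> = (if qbit nn i 0 = b then 1 else 0)" using i by (simp add: sum.delta)
  finally show ?thesis .
qed

lemma Ginv: "j \<le> N \<Longrightarrow> i < 2 ^ nn \<Longrightarrow> i2 < 2 ^ nn \<Longrightarrow>
   (\<forall>q \<le> j * w. qbit nn i q = qbit nn i2 q) \<Longrightarrow> G j i b = G j i2 b"
proof (induction j arbitrary: b)
  case 0 then show ?case using G0 by simp
next
  case (Suc j)
  have j: "j < N" using Suc.prems by simp
  have IH: "G j i b' = G j i2 b'" for b'
    using Suc.IH[of b'] Suc.prems by (auto intro: order_trans[of _ "j * w"])
  have s: "s0' j b' i = s0' j b' i2" for b'
    unfolding s0'_def
  proof (rule fromb_cong)
    fix t assume "t < w"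
    then have "j * w + t \<le> Suc j * w" by simp
    then show "(if t = 0 then b' else qbit nn i (j * w + t)) = (if t = 0 then b' else qbit nn i2 (j * w + t))"
      using Suc.prems(4) by simp
  qed
  show ?case using G_rec[OF j Suc.prems(2)] G_rec[OF j Suc.prems(3)] IH s by simp
qed

definition H :: "nat \<Rightarrow> bool \<Rightarrow> real" where
  "H j b = (\<Sum>i<2 ^ nn. if \<not> qbit nn i 0 then G j i b else 0)"

definition u :: "bool \<Rightarrow> nat \<Rightarrow> nat" where
  "u b r = fromb w (\<lambda>t. if t = 0 then b else qbit (w - 1) r (t - 1))"

definition P :: "bool \<Rightarrow> bool \<Rightarrow> real" where
  "P b b' = (\<Sum>r<2 ^ (w - 1). T b (u b' r)) / 2 ^ (w - 1)"

definition psR :: "nat \<Rightarrow> nat list" where "psR j = R_reg w (Suc j)"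

lemma psR_len: "length (psR j) = w - 1" unfolding psR_def R_reg_def by simp

lemma psR_nth: "t < w - 1 \<Longrightarrow> psR j ! t = j * w + 1 + t"
  unfolding psR_def R_reg_def by (simp add: nth_upt)

lemma psR_set: "q \<in> set (psR j) \<longleftrightarrow> j * w < q \<and> q < Suc j * w"
  unfolding psR_def R_reg_def by auto

lemma blkR: "j < N \<Longrightarrow> blk nn (psR j)"
proof
  assume j: "j < N"
  show "distinct (psR j)" unfolding psR_def R_reg_def by simp
  show "set (psR j) \<subseteq> {..<nn}" using psR_set nn_bound[OF j] by auto
qed

lemma H_rec:
  assumes j: "j < N"
  shows "H (Suc j) b = (\<Sum>b'\<in>UNIV. P b b' * H j b')"
proof -
  interpret R: blk nn "psR j" by (rule blkR[OF j])
  have q0: "qbit nn (put nn (psR j) c r) 0 = qbit nn c 0" for c r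
    using qbit_put[of 0 nn "psR j" c r] psR_set by simp
  have su: "s0' j b' (put nn (psR j) c r) = u b' r" for b' c r
    unfolding s0'_def u_def
  proof (rule fromb_cong)
    fix t assume t: "t < w"
    show "(if t = 0 then b' else qbit nn (put nn (psR j) c r) (j * w + t)) =
          (if t = 0 then b' else qbit (w - 1) r (t - 1))"
    proof (cases "t = 0")
      case False
      have tt: "t - 1 < w - 1" using t False by simp
      have pn: "psR j ! (t - 1) = j * w + t" using psR_nth[OF tt] False by simp
      have mem: "j * w + t \<in> set (psR j)" using psR_set t False by simp
      have ix: "idx (psR j) (j * w + t) = t - 1" using idx_nth[OF R.dist, of "t - 1"] tt psR_len pn by simp
      have "j * w + t < nn" using t nn_bound[OF j] by simp
      then show ?thesis using qbit_put[of "j * w + t" nn "psR j" c r] mem ix psR_len False by simp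
    qed simp
  qed
  have gi: "G j (put nn (psR j) c r) b' = G j c b'" if c: "c \<in> Cset nn (psR j)" for c r b'
  proof (rule Ginv)
    show "j \<le> N" using j by simp
    show "put nn (psR j) c r < 2 ^ nn" by (rule put_lt)
    show "c < 2 ^ nn" using c unfolding Cset_def by simp
    show "\<forall>q\<le>j * w. qbit nn (put nn (psR j) c r) q = qbit nn c q"
    proof (intro allI impI)
      fix q assume q: "q \<le> j * w"
      then have "q < nn" using nn_bound[OF j] by simp
      then show "qbit nn (put nn (psR j) c r) q = qbit nn c q" using qbit_put psR_set q by simp
    qed
  qed
  define A where "A b' = (\<Sum>c\<in>Cset nn (psR j). if \<not> qbit nn c 0 then G j c b' else 0)" for b'
  have Hj: "H j b' = 2 ^ (w - 1) * A b'" for b'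
  proof -
    have "H j b' = (\<Sum>c\<in>Cset nn (psR j). \<Sum>r\<in>{..<2 ^ (w - 1)::nat}. if \<not> qbit nn c 0 then G j c b' else 0)"
      unfolding H_def R.sum_block psR_len using q0 gi by (intro sum.cong refl) auto
    then show ?thesis unfolding A_def by (simp add: sum_distrib_left)
  qed
  have "H (Suc j) b = (\<Sum>i<2 ^ nn. \<Sum>b'\<in>UNIV. if \<not> qbit nn i 0 then T b (s0' j b' i) * G j i b' else 0)"
    unfolding H_def using G_rec[OF j] by (intro sum.cong refl) (auto simp: sum_distrib_left)
  also have "\<dots> = (\<Sum>b'\<in>UNIV. \<Sum>i<2 ^ nn. if \<not> qbit nn i 0 then T b (s0' j b' i) * G j i b' else 0)"
    by (rule sum.swap)
  also have "\<dots> = (\<Sum>b'\<in>UNIV. (\<Sum>r<2 ^ (w - 1). T b (u b' r)) * A b')"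
  proof (rule sum.cong[OF refl])
    fix b' :: bool
    have "(\<Sum>i<2 ^ nn. if \<not> qbit nn i 0 then T b (s0' j b' i) * G j i b' else 0) =
      (\<Sum>c\<in>Cset nn (psR j). \<Sum>r<2 ^ (w - 1). T b (u b' r) * (if \<not> qbit nn c 0 then G j c b' else 0))"
      unfolding R.sum_block psR_len using q0 gi su by (intro sum.cong refl) auto
    also have "\<dots> = (\<Sum>r<2 ^ (w - 1). T b (u b' r)) * A b'"
      unfolding A_def sum_distrib_left sum_distrib_right by simp
    finally show "(\<Sum>i<2 ^ nn. if \<not> qbit nn i 0 then T b (s0' j b' i) * G j i b' else 0) =
       (\<Sum>r<2 ^ (w - 1). T b (u b' r)) * A b'" .
  qed
  also have "\<dots> = (\<Sum>b'\<in>UNIV. P b b' * H j b')"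
    unfolding P_def Hj by (intro sum.cong refl) simp
  finally show ?thesis .
qed

end




lemma sum_half: fixes h :: nat shows "(\<Sum>c<h + h. f c) = (\<Sum>c<h. f c) + (\<Sum>r<h. f (h + r))"
proof -
  have e: "{..<h + h} = {..<h} \<union> {h..<h + h}" by auto
  have "sum f {h..<h + h} = sum (f \<circ> (+) h) {0..<h}"
    using sum.atLeastLessThan_shift_bounds[of f 0 h h] by simp
  then show ?thesis unfolding e by (subst sum.union_disjoint) (auto simp: atLeast0LessThan)
qed

lemma Pi_mult_entry:
  assumes U: "U \<in> carrier_mat (2 ^ m) (2 ^ m)" and k: "k < 2 ^ m" and c: "c < 2 ^ m"
  shows "(Pi_acc m * U) $$ (k, c) = (if \<not> qbit m k 0 then U $$ (k, c) else 0)"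
proof -
  have Pc: "Pi_acc m \<in> carrier_mat (2 ^ m) (2 ^ m)" unfolding Pi_acc_def by simp
  have "(Pi_acc m * U) $$ (k, c) = (\<Sum>a<2 ^ m. Pi_acc m $$ (k, a) * U $$ (a, c))"
    by (rule mult_entry[OF Pc U k c])
  also have "\<dots> = (\<Sum>a<2 ^ m. if a = k then (if \<not> qbit m k 0 then U $$ (k, c) else 0) else 0)"
    using k by (intro sum.cong refl) (auto simp: Pi_acc_def)
  also have "\<dots> = (if \<not> qbit m k 0 then U $$ (k, c) else 0)" using k by (simp add: sum.delta)
  finally show ?thesis .
qed

lemma rho_mult_entry:
  assumes A: "A \<in> carrier_mat (2 ^ m) (2 ^ m)" and k: "k < 2 ^ m" and c: "c < 2 ^ m"
  shows "(A * rho_init m 1) $$ (k, c) = (if \<not> qbit m c 0 then A $$ (k, c) / 2 ^ (m - 1) else 0)"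
proof -
  have Rc: "rho_init m 1 \<in> carrier_mat (2 ^ m) (2 ^ m)" unfolding rho_init_def by simp
  have "(A * rho_init m 1) $$ (k, c) = (\<Sum>b<2 ^ m. A $$ (k, b) * rho_init m 1 $$ (b, c))"
    by (rule mult_entry[OF A Rc k c])
  also have "\<dots> = (\<Sum>b<2 ^ m. if b = c then (if \<not> qbit m c 0 then A $$ (k, c) / 2 ^ (m - 1) else 0) else 0)"
    using c by (intro sum.cong refl) (auto simp: rho_init_def)
  also have "\<dots> = (if \<not> qbit m c 0 then A $$ (k, c) / 2 ^ (m - 1) else 0)" using c by (simp add: sum.delta)
  finally show ?thesis .
qed

lemma adj_carrier: "U \<in> carrier_mat a b \<Longrightarrow> adj U \<in> carrier_mat b a"
  unfolding adj_def by simp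

lemma adj_entry: "U \<in> carrier_mat a b \<Longrightarrow> i < b \<Longrightarrow> j < a \<Longrightarrow> adj U $$ (i, j) = cnj (U $$ (j, i))"
  unfolding adj_def by simp

lemma p_acc_formula:
  assumes U: "U \<in> carrier_mat (2 ^ m) (2 ^ m)"
  shows "p_acc U m 1 = (\<Sum>k<2 ^ m. \<Sum>c<2 ^ m.
      if \<not> qbit m k 0 \<and> \<not> qbit m c 0 then (cmod (U $$ (k, c)))\<^sup>2 else 0) / 2 ^ (m - 1)"
proof -
  have Pc: "Pi_acc m \<in> carrier_mat (2 ^ m) (2 ^ m)" unfolding Pi_acc_def by simp
  have Rc: "rho_init m 1 \<in> carrier_mat (2 ^ m) (2 ^ m)" unfolding rho_init_def by simp
  have PU: "Pi_acc m * U \<in> carrier_mat (2 ^ m) (2 ^ m)" using Pc U by simp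
  have PUR: "Pi_acc m * U * rho_init m 1 \<in> carrier_mat (2 ^ m) (2 ^ m)" using PU Rc by simp
  have AU: "adj U \<in> carrier_mat (2 ^ m) (2 ^ m)" using adj_carrier[OF U] .
  have entry: "(Pi_acc m * U * rho_init m 1 * adj U) $$ (k, k) =
     complex_of_real ((\<Sum>c<2 ^ m. if \<not> qbit m k 0 \<and> \<not> qbit m c 0 then (cmod (U $$ (k, c)))\<^sup>2 else 0) / 2 ^ (m - 1))"
    if k: "k < 2 ^ m" for k
  proof -
    have "(Pi_acc m * U * rho_init m 1 * adj U) $$ (k, k) =
        (\<Sum>c<2 ^ m. (Pi_acc m * U * rho_init m 1) $$ (k, c) * adj U $$ (c, k))"
      by (rule mult_entry[OF PUR AU k k])
    also have "\<dots> = (\<Sum>c<2 ^ m. complex_of_real ((if \<not> qbit m k 0 \<and> \<not> qbit m c 0 then (cmod (U $$ (k, c)))\<^sup>2 else 0) / 2 ^ (m - 1)))"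
    proof (rule sum.cong[OF refl])
      fix c :: nat assume "c \<in> {..<2 ^ m}"
      then have c: "c < 2 ^ m" by simp
      show "(Pi_acc m * U * rho_init m 1) $$ (k, c) * adj U $$ (c, k) =
        complex_of_real ((if \<not> qbit m k 0 \<and> \<not> qbit m c 0 then (cmod (U $$ (k, c)))\<^sup>2 else 0) / 2 ^ (m - 1))"
        unfolding rho_mult_entry[OF PU k c] Pi_mult_entry[OF U k c] adj_entry[OF U c k]
        using complex_norm_square[of "U $$ (k, c)", unfolded of_real_power] by auto
    qed
    also have "\<dots> = complex_of_real ((\<Sum>c<2 ^ m. if \<not> qbit m k 0 \<and> \<not> qbit m c 0 then (cmod (U $$ (k, c)))\<^sup>2 else 0) / 2 ^ (m - 1))"
      by (simp add: sum_divide_distrib)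
    finally show ?thesis .
  qed
  have "tr (Pi_acc m * U * rho_init m 1 * adj U) =
      (\<Sum>k<2 ^ m. complex_of_real ((\<Sum>c<2 ^ m. if \<not> qbit m k 0 \<and> \<not> qbit m c 0 then (cmod (U $$ (k, c)))\<^sup>2 else 0) / 2 ^ (m - 1)))"
    unfolding tr_def using PUR entry by (intro sum.cong) auto
  then show ?thesis unfolding p_acc_def by (simp add: sum_divide_distrib)
qed




context circ begin

abbreviation h where "h \<equiv> (2::nat) ^ (w - 1)"

lemma hh: "(2::nat) ^ w = h + h"
proof -
  have "w = Suc (w - 1)" using w1 by simp
  then have "(2::nat) ^ w = 2 * 2 ^ (w - 1)" by (metis power_Suc)
  then show ?thesis by simp
qed

lemma qbit_lo: "s < h \<Longrightarrow> \<not> qbit w s 0"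
  unfolding qbit_def by simp

lemma qbit_hi: "r < h \<Longrightarrow> qbit w (h + r) 0"
  unfolding qbit_def by simp

lemma u_eq: "r < h \<Longrightarrow> u b r = (if b then h else 0) + r"
proof -
  assume r: "r < h"
  have w: "w = Suc (w - 1)" using w1 by simp
  have "u b r = (if b then h else 0) + fromb (w - 1) (qbit (w - 1) r)"
    unfolding u_def by (subst w, subst fromb_Suc) simp
  then show ?thesis using fromb_qbit r by simp
qed

lemma T_split: "T b s' = (if b then (\<Sum>r<h. (cmod (Q $$ (h + r, s')))\<^sup>2) else (\<Sum>s<h. (cmod (Q $$ (s, s')))\<^sup>2))"
  unfolding T_def hh sum_half using qbit_lo qbit_hi by simp

lemma col_sum:
  assumes U: "unitary_mat (2 ^ w) Q" and c: "c < 2 ^ w"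
  shows "(\<Sum>s<2 ^ w. (cmod (Q $$ (s, c)))\<^sup>2) = 1"
proof -
  have A: "adj Q \<in> carrier_mat (2 ^ w) (2 ^ w)" using adj_carrier[OF QC] .
  have "(adj Q * Q) $$ (c, c) = 1" using U c unfolding unitary_mat_def by simp
  moreover have "(adj Q * Q) $$ (c, c) = (\<Sum>s<2 ^ w. adj Q $$ (c, s) * Q $$ (s, c))"
    by (rule mult_entry[OF A QC c c])
  moreover have "\<dots> = complex_of_real (\<Sum>s<2 ^ w. (cmod (Q $$ (s, c)))\<^sup>2)"
    unfolding of_real_sum
  proof (rule sum.cong[OF refl])
    fix s assume "s \<in> {..<2 ^ w::nat}"
    then show "adj Q $$ (c, s) * Q $$ (s, c) = complex_of_real ((cmod (Q $$ (s, c)))\<^sup>2)"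
      using adj_entry[OF QC c, of s] complex_norm_square[of "Q $$ (s, c)"] by (simp add: mult.commute)
  qed
  ultimately show ?thesis by (metis of_real_eq_1_iff)
qed

lemma row_sum:
  assumes U: "unitary_mat (2 ^ w) Q" and s: "s < 2 ^ w"
  shows "(\<Sum>c<2 ^ w. (cmod (Q $$ (s, c)))\<^sup>2) = 1"
proof -
  have A: "adj Q \<in> carrier_mat (2 ^ w) (2 ^ w)" using adj_carrier[OF QC] .
  have "(Q * adj Q) $$ (s, s) = 1" using U s unfolding unitary_mat_def by simp
  moreover have "(Q * adj Q) $$ (s, s) = (\<Sum>c<2 ^ w. Q $$ (s, c) * adj Q $$ (c, s))"
    by (rule mult_entry[OF QC A s s])
  moreover have "\<dots> = complex_of_real (\<Sum>c<2 ^ w. (cmod (Q $$ (s, c)))\<^sup>2)"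
    unfolding of_real_sum
  proof (rule sum.cong[OF refl])
    fix c assume "c \<in> {..<2 ^ w::nat}"
    then show "Q $$ (s, c) * adj Q $$ (c, s) = complex_of_real ((cmod (Q $$ (s, c)))\<^sup>2)"
      using adj_entry[OF QC _ s, of c] complex_norm_square[of "Q $$ (s, c)"] by simp
  qed
  ultimately show ?thesis by (metis of_real_eq_1_iff)
qed

definition A00 where "A00 = (\<Sum>s<h. \<Sum>r<h. (cmod (Q $$ (s, r)))\<^sup>2)"

lemma pQ: "p_acc Q w 1 = A00 / h"
proof -
  have "p_acc Q w 1 = (\<Sum>k<2 ^ w. \<Sum>c<2 ^ w.
      if \<not> qbit w k 0 \<and> \<not> qbit w c 0 then (cmod (Q $$ (k, c)))\<^sup>2 else 0) / 2 ^ (w - 1)"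
    by (rule p_acc_formula[OF QC])
  also have "(\<Sum>k<2 ^ w. \<Sum>c<2 ^ w.
      if \<not> qbit w k 0 \<and> \<not> qbit w c 0 then (cmod (Q $$ (k, c)))\<^sup>2 else 0) = A00"
    unfolding hh sum_half A00_def using qbit_lo qbit_hi by simp
  finally show ?thesis by simp
qed

definition B01 where "B01 = (\<Sum>s<h. \<Sum>r<h. (cmod (Q $$ (s, h + r)))\<^sup>2)"

lemma h_lt: "r < h \<Longrightarrow> r < 2 ^ w" "r < h \<Longrightarrow> h + r < 2 ^ w"
  using hh by auto

lemma P_vals:
  assumes U: "unitary_mat (2 ^ w) Q"
  shows "P False False = A00 / h" "P True False = (h - A00) / h"
        "P False True = B01 / h" "P True True = (h - B01) / h" "B01 = h - A00"
proof -
  have uF: "\<And>r. r < h \<Longrightarrow> u False r = r" and uT: "\<And>r. r < h \<Longrightarrow> u True r = h + r"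
    using u_eq by auto
  have col1: "(\<Sum>s<h. (cmod (Q $$ (s, c)))\<^sup>2) + (\<Sum>r<h. (cmod (Q $$ (h + r, c)))\<^sup>2) = 1"
    if "c < 2 ^ w" for c using col_sum[OF U that] unfolding hh sum_half .
  have row1: "(\<Sum>c<h. (cmod (Q $$ (s, c)))\<^sup>2) + (\<Sum>r<h. (cmod (Q $$ (s, h + r)))\<^sup>2) = 1"
    if "s < 2 ^ w" for s using row_sum[OF U that] unfolding hh sum_half .
  have A00': "A00 = (\<Sum>r<h. \<Sum>s<h. (cmod (Q $$ (s, r)))\<^sup>2)" unfolding A00_def by (rule sum.swap)
  have B01': "B01 = (\<Sum>r<h. \<Sum>s<h. (cmod (Q $$ (s, h + r)))\<^sup>2)" unfolding B01_def by (rule sum.swap)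
  show "P False False = A00 / h"
    unfolding P_def T_split A00' using uF by simp
  have "(\<Sum>r<h. T True (u False r)) = (\<Sum>r<h. 1 - (\<Sum>s<h. (cmod (Q $$ (s, r)))\<^sup>2))"
    unfolding T_split using uF col1 h_lt by (intro sum.cong refl) (auto simp: algebra_simps eq_diff_eq)
  also have "\<dots> = h - A00" unfolding A00' sum_subtractf by simp
  finally show "P True False = (h - A00) / h" unfolding P_def by simp
  show "P False True = B01 / h"
    unfolding P_def T_split B01' using uT by simp
  have "(\<Sum>r<h. T True (u True r)) = (\<Sum>r<h. 1 - (\<Sum>s<h. (cmod (Q $$ (s, h + r)))\<^sup>2))"
    unfolding T_split using uT col1 h_lt by (intro sum.cong refl) (auto simp: algebra_simps eq_diff_eq)
  also have "\<dots> = h - B01" unfolding B01' sum_subtractf by simp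
  finally show "P True True = (h - B01) / h" unfolding P_def by simp
  have "B01 = (\<Sum>s<h. 1 - (\<Sum>c<h. (cmod (Q $$ (s, c)))\<^sup>2))"
    unfolding B01_def using row1 h_lt by (intro sum.cong refl) (auto simp: algebra_simps eq_diff_eq)
  also have "\<dots> = h - A00" unfolding A00_def sum_subtractf by simp
  finally show "B01 = h - A00" .
qed

lemma H0: "H 0 False = 2 ^ (N * w)" "H 0 True = 0"
proof -
  have e: "(2::nat) ^ nn = 2 ^ (N * w) + 2 ^ (N * w)" by simp
  have lo: "\<And>s. s < 2 ^ (N * w) \<Longrightarrow> \<not> qbit nn s 0" unfolding qbit_def by simp
  have hi: "\<And>r. r < 2 ^ (N * w) \<Longrightarrow> qbit nn (2 ^ (N * w) + r) 0" unfolding qbit_def by simp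
  have lt1: "\<And>s::nat. s < 2 ^ (N * w) \<Longrightarrow> s < 2 ^ nn" and lt2: "\<And>s::nat. s < 2 ^ (N * w) \<Longrightarrow> 2 ^ (N * w) + s < 2 ^ nn"
    by auto
  show "H 0 False = 2 ^ (N * w)"
    unfolding H_def e sum_half using lo hi G0 lt1 lt2 by simp
  show "H 0 True = 0"
    unfolding H_def e sum_half using lo hi G0 lt1 lt2 by simp
qed

lemma pR: "p_acc (Rcirc Q w N) nn 1 = H N False / 2 ^ (N * w)"
proof -
  have "p_acc (S N) nn 1 = (\<Sum>k<2 ^ nn. \<Sum>c<2 ^ nn.
      if \<not> qbit nn k 0 \<and> \<not> qbit nn c 0 then (cmod (S N $$ (k, c)))\<^sup>2 else 0) / 2 ^ (nn - 1)"
    by (rule p_acc_formula[OF S_carrier])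
  also have "(\<Sum>k<2 ^ nn. \<Sum>c<2 ^ nn.
      if \<not> qbit nn k 0 \<and> \<not> qbit nn c 0 then (cmod (S N $$ (k, c)))\<^sup>2 else 0) = H N False"
    unfolding H_def G_def by (subst sum.swap) (auto intro!: sum.cong)
  finally show ?thesis unfolding Rcirc_def by simp
qed

lemma H_closed:
  assumes U: "unitary_mat (2 ^ w) Q"
  shows "j \<le> N \<Longrightarrow> H j False = 2 ^ (N * w) * (1/2 + 1/2 * (2 * (A00 / h) - 1) ^ j) \<and>
                   H j True = 2 ^ (N * w) * (1/2 - 1/2 * (2 * (A00 / h) - 1) ^ j)"
proof (induction j)
  case 0 then show ?case using H0 by simp
next
  case (Suc j)
  then have j: "j < N" by simp
  have hp: "(h::real) > 0" by simp
  have rec: "H (Suc j) b = P b False * H j False + P b True * H j True" for b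
    using H_rec[OF j] by (simp add: UNIV_bool add.commute)
  have IH: "H j False = 2 ^ (N * w) * (1/2 + 1/2 * (2 * (A00 / h) - 1) ^ j)"
           "H j True = 2 ^ (N * w) * (1/2 - 1/2 * (2 * (A00 / h) - 1) ^ j)"
    using Suc.IH j by auto
  define p where "p = A00 / h"
  have P: "P False False = p" "P True False = 1 - p" "P False True = 1 - p" "P True True = p"
    using P_vals[OF U] hp unfolding p_def by (auto simp: field_simps)
  show ?case unfolding rec P IH p_def[symmetric] power_Suc by (simp add: field_simps)
qed

end



theorem proposition12:
  fixes Q :: "complex mat" and w N :: nat
  assumes "w \<ge> 1" and "N \<ge> 1" and "unitary_mat (2 ^ w) Q"
  shows "p_acc (Rcirc Q w N) (N * w + 1) 1 = 1/2 + 1/2 * (2 * p_acc Q w 1 - 1) ^ N"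
proof -
  have QC: "Q \<in> carrier_mat (2 ^ w) (2 ^ w)" using assms(3) unfolding unitary_mat_def by simp
  interpret circ Q w N using assms(1) QC by unfold_locales
  have "p_acc (Rcirc Q w N) (N * w + 1) 1 = H N False / 2 ^ (N * w)" by (rule pR)
  also have "\<dots> = 1/2 + 1/2 * (2 * (A00 / h) - 1) ^ N"
    using H_closed[OF assms(3), of N] by simp
  also have "A00 / h = p_acc Q w 1" using pQ by simp
  finally show ?thesis .
qed

end
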